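(* Let $\Omega=\mathbb N$, $\Sigma=2^{\mathbb N}$ and $\mu$ a finite measure with $\mu(\{n\})>0$ for all $n$. Let $X(\mu)$ be a Banach rectangular sequence space containing every canonical sequence $e_n$ ($e_n(k)=1$ if $k=n$ and $0$ otherwise), and let $X_0$ be the closure in $X(\mu)$ of $\operatorname{span}\{e_n:n\in\mathbb N\}$. Then $\{e_n\}$ is an unconditional basis for $X_0$.
   Context: A Banach rectangular sequence space is a vector space $X(\mu)$ of real sequences with a complete norm such that for some $C>0$, $\chi_Af\in X(\mu)$ and $\|\chi_Af\|\le C\|f\|$ for all $f\in X(\mu)$, $A\subseteq\mathbb N$. An unconditional basis of $X_0$ is a Schauder basis $\{x_n\}$ (each $x\in X_0$ is uniquely $\sum a_nx_n$) such that for each $x=\sum a_nx_n$ the series $\sum a_{\pi(n)}x_{\pi(n)}$ converges for every permutation $\pi$ of $\mathbb N$. *)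

theory Defs
  imports "HOL-Analysis.Analysis"
begin

text \<open>Sequences are functions nat \<Rightarrow> real; a sequence space is a set X of
sequences together with a function N (the norm), meaningful on X.\<close>

definition normed_seq_space :: "(nat \<Rightarrow> real) set \<Rightarrow> ((nat \<Rightarrow> real) \<Rightarrow> real) \<Rightarrow> bool" where
  "normed_seq_space X N \<longleftrightarrow>
     (\<lambda>k. 0) \<in> X \<and>
     (\<forall>f\<in>X. \<forall>g\<in>X. (\<lambda>k. f k + g k) \<in> X) \<and>
     (\<forall>f\<in>X. \<forall>c::real. (\<lambda>k. c * f k) \<in> X) \<and>
     (\<forall>f\<in>X. 0 \<le> N f \<and> (N f = 0 \<longleftrightarrow> f = (\<lambda>k. 0))) \<and>
     (\<forall>f\<in>X. \<forall>c::real. N (\<lambda>k. c * f k) = \<bar>c\<bar> * N f) \<and>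
     (\<forall>f\<in>X. \<forall>g\<in>X. N (\<lambda>k. f k + g k) \<le> N f + N g)"

definition norm_conv :: "((nat \<Rightarrow> real) \<Rightarrow> real) \<Rightarrow> (nat \<Rightarrow> nat \<Rightarrow> real) \<Rightarrow> (nat \<Rightarrow> real) \<Rightarrow> bool" where
  "norm_conv N s x \<longleftrightarrow> (\<lambda>m. N (\<lambda>k. s m k - x k)) \<longlonglongrightarrow> 0"

definition complete_seq_space :: "(nat \<Rightarrow> real) set \<Rightarrow> ((nat \<Rightarrow> real) \<Rightarrow> real) \<Rightarrow> bool" where
  "complete_seq_space X N \<longleftrightarrow>
     (\<forall>s. (\<forall>m. s m \<in> X) \<and>
          (\<forall>e>0. \<exists>M. \<forall>m\<ge>M. \<forall>n\<ge>M. N (\<lambda>k. s m k - s n k) < e)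
        \<longrightarrow> (\<exists>x\<in>X. norm_conv N s x))"

definition banach_rectangular_seq_space :: "(nat \<Rightarrow> real) set \<Rightarrow> ((nat \<Rightarrow> real) \<Rightarrow> real) \<Rightarrow> bool" where
  "banach_rectangular_seq_space X N \<longleftrightarrow>
     normed_seq_space X N \<and> complete_seq_space X N \<and>
     (\<exists>C>0. \<forall>f\<in>X. \<forall>A::nat set.
        (\<lambda>k. indicator A k * f k) \<in> X \<and> N (\<lambda>k. indicator A k * f k) \<le> C * N f)"

definition canon_seq :: "nat \<Rightarrow> nat \<Rightarrow> real" ("e\<^sub>_") where
  "canon_seq n = (\<lambda>k. if k = n then 1 else 0)"

definition seq_span :: "(nat \<Rightarrow> nat \<Rightarrow> real) \<Rightarrow> (nat \<Rightarrow> real) set" where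
  "seq_span E = {(\<lambda>k. \<Sum>n\<in>F. c n * E n k) | F c. finite F}"

definition seq_closure :: "(nat \<Rightarrow> real) set \<Rightarrow> ((nat \<Rightarrow> real) \<Rightarrow> real) \<Rightarrow> (nat \<Rightarrow> real) set \<Rightarrow> (nat \<Rightarrow> real) set" where
  "seq_closure X N S = {x\<in>X. \<exists>s. (\<forall>m. s m \<in> S) \<and> norm_conv N s x}"

definition partial_sums :: "(nat \<Rightarrow> real) \<Rightarrow> (nat \<Rightarrow> nat \<Rightarrow> real) \<Rightarrow> nat \<Rightarrow> nat \<Rightarrow> real" where
  "partial_sums a E = (\<lambda>m k. \<Sum>n<m. a n * E n k)"

definition schauder_basis :: "((nat \<Rightarrow> real) \<Rightarrow> real) \<Rightarrow> (nat \<Rightarrow> nat \<Rightarrow> real) \<Rightarrow> (nat \<Rightarrow> real) set \<Rightarrow> bool" where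
  "schauder_basis N E Y \<longleftrightarrow> (\<forall>n. E n \<in> Y) \<and>
     (\<forall>x\<in>Y. \<exists>!a. norm_conv N (partial_sums a E) x)"

definition unconditional_basis :: "(nat \<Rightarrow> real) set \<Rightarrow> ((nat \<Rightarrow> real) \<Rightarrow> real) \<Rightarrow> (nat \<Rightarrow> nat \<Rightarrow> real) \<Rightarrow> (nat \<Rightarrow> real) set \<Rightarrow> bool" where
  "unconditional_basis X N E Y \<longleftrightarrow> schauder_basis N E Y \<and>
     (\<forall>x\<in>Y. \<forall>a. norm_conv N (partial_sums a E) x \<longrightarrow>
        (\<forall>\<pi>. bij \<pi> \<longrightarrow> (\<exists>y\<in>X. norm_conv N (partial_sums (a \<circ> \<pi>) (E \<circ> \<pi>)) y)))"

end

theory Submission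
  imports Defs
begin

lemma ns_add: "normed_seq_space X N \<Longrightarrow> f \<in> X \<Longrightarrow> g \<in> X \<Longrightarrow> (\<lambda>k. f k + g k) \<in> X"
  unfolding normed_seq_space_def by blast
lemma ns_scale: "normed_seq_space X N \<Longrightarrow> f \<in> X \<Longrightarrow> (\<lambda>k. c * f k) \<in> X"
  unfolding normed_seq_space_def by blast

lemma ns_nonneg: "normed_seq_space X N \<Longrightarrow> f \<in> X \<Longrightarrow> 0 \<le> N f"
  unfolding normed_seq_space_def by blast

lemma ns_homog: "normed_seq_space X N \<Longrightarrow> f \<in> X \<Longrightarrow> N (\<lambda>k. c * f k) = \<bar>c\<bar> * N f"
  unfolding normed_seq_space_def by blast
lemma ns_zero: "normed_seq_space X N \<Longrightarrow> f \<in> X \<Longrightarrow> N f = 0 \<Longrightarrow> f = (\<lambda>k. 0)"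
  unfolding normed_seq_space_def by blast

lemma diff_in:
  assumes "normed_seq_space X N" "f \<in> X" "g \<in> X"
  shows "(\<lambda>k. f k - g k) \<in> X"
proof -
  have "(\<lambda>k. (-1) * g k) \<in> X" using ns_scale[OF assms(1,3)] .
  from ns_add[OF assms(1,2) this] show ?thesis by simp
qed

lemma span_sub:
  assumes "normed_seq_space X N" "\<forall>n. canon_seq n \<in> X"
  shows "seq_span canon_seq \<subseteq> X"
proof
  fix s assume "s \<in> seq_span canon_seq"
  then obtain F c where s: "s = (\<lambda>k. \<Sum>n\<in>F. c n * canon_seq n k)" and F: "finite F"
    unfolding seq_span_def by blast
  have "(\<lambda>k. \<Sum>n\<in>F. c n * canon_seq n k) \<in> X" using F
  proof (induction F rule: finite_induct)
    case empty
    then show ?case using assms(1) unfolding normed_seq_space_def by simp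
  next
    case (insert n F)
    have "(\<lambda>k. c n * canon_seq n k) \<in> X" using ns_scale[OF assms(1)] assms(2) by blast
    from ns_add[OF assms(1) this insert.IH]
    have "(\<lambda>k. c n * canon_seq n k + (\<Sum>n\<in>F. c n * canon_seq n k)) \<in> X" by simp
    then show ?case using insert by simp
  qed
  then show "s \<in> X" using s by simp
qed

lemma span_support:
  assumes "s \<in> seq_span canon_seq"
  shows "\<exists>M. \<forall>k\<ge>M. s k = 0"
proof -
  obtain F c where s: "s = (\<lambda>k. \<Sum>n\<in>F. c n * canon_seq n k)" and F: "finite F"
    using assms unfolding seq_span_def by blast
  obtain M where M: "F \<subseteq> {..<M}" using F finite_nat_bounded by blast
  have "s k = 0" if "k \<ge> M" for k
  proof -
    have "k \<notin> F" using M that by auto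
    then show ?thesis unfolding s canon_seq_def by (auto intro!: sum.neutral)
  qed
  then show ?thesis by blast
qed

lemma keylemma:
  assumes B: "banach_rectangular_seq_space X N" and E: "\<forall>n. canon_seq n \<in> X"
    and x: "x \<in> seq_closure X N (seq_span canon_seq)" and e: "e > 0"
  shows "\<exists>M. \<forall>A. {..<M} \<subseteq> A \<longrightarrow> \<bar>N (\<lambda>k. indicator A k * x k - x k)\<bar> < e"
proof -
  have ns: "normed_seq_space X N" using B unfolding banach_rectangular_seq_space_def by blast
  obtain C where C: "C > 0" and rect: "\<forall>f\<in>X. \<forall>A::nat set.
        (\<lambda>k. indicator A k * f k) \<in> X \<and> N (\<lambda>k. indicator A k * f k) \<le> C * N f"
    using B unfolding banach_rectangular_seq_space_def by blast
  obtain s where s: "\<forall>m. s m \<in> seq_span canon_seq" and conv: "norm_conv N s x" and xX: "x \<in> X"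
    using x unfolding seq_closure_def by blast
  have ec: "e / C > 0" using e C by simp
  have "(\<lambda>m. N (\<lambda>k. s m k - x k)) \<longlonglongrightarrow> 0" using conv unfolding norm_conv_def .
  from LIMSEQ_D[OF this ec] obtain no where "\<forall>n\<ge>no. norm (N (\<lambda>k. s n k - x k) - 0) < e / C"
    by blast
  then have "norm (N (\<lambda>k. s no k - x k) - 0) < e / C" by blast
  then have m: "N (\<lambda>k. s no k - x k) < e / C" by simp
  define m where "m = no"
  have m: "N (\<lambda>k. s m k - x k) < e / C" using m m_def by simp
  obtain M where M: "\<forall>k\<ge>M. s m k = 0" using span_support s by blast
  have smX: "s m \<in> X" using span_sub[OF ns E] s by blast
  have dX: "(\<lambda>k. s m k - x k) \<in> X" using diff_in[OF ns smX xX] .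
  have "\<bar>N (\<lambda>k. indicator A k * x k - x k)\<bar> < e" if A: "{..<M} \<subseteq> A" for A
  proof -
    have eq: "(\<lambda>k. indicator A k * x k - x k) = (\<lambda>k. indicator (-A) k * (s m k - x k))"
    proof
      fix k
      show "indicator A k * x k - x k = indicator (-A) k * (s m k - x k)"
      proof (cases "k \<in> A")
        case True then show ?thesis by simp
      next
        case False
        have "k \<ge> M"
        proof (rule ccontr)
          assume "\<not> M \<le> k"
          then have "k \<in> {..<M}" by simp
          then show False using A False by blast
        qed
        then show ?thesis using False M by simp
      qed
    qed
    have "N (\<lambda>k. indicator (-A) k * (s m k - x k)) \<le> C * N (\<lambda>k. s m k - x k)"
      using bspec[OF rect dX] by blast
    also have "\<dots> < C * (e / C)" by (rule mult_strict_left_mono[OF m C])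
    also have "\<dots> = e" using C by simp
    finally have "N (\<lambda>k. indicator (-A) k * (s m k - x k)) < e" .
    moreover have "(\<lambda>k. indicator (-A) k * (s m k - x k)) \<in> X"
      using bspec[OF rect dX] by blast
    ultimately have "\<bar>N (\<lambda>k. indicator (-A) k * (s m k - x k))\<bar> < e"
      using ns_nonneg[OF ns] by (simp add: abs_of_nonneg)
    then show ?thesis by (simp only: eq)
  qed
  then show ?thesis by blast
qed

lemma sum_delta_aux: assumes fin: "finite S" shows "(\<Sum>j\<in>S. a j * canon_seq j k) = indicator S k * a k"
proof -
  have "(\<Sum>j\<in>S. a j * canon_seq j k) = (\<Sum>j\<in>S. if j = k then a j else 0)"
    by (rule sum.cong) (auto simp: canon_seq_def)
  also have "\<dots> = indicator S k * a k" using fin by (simp add: sum.delta indicator_def)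
  finally show ?thesis .
qed

lemma ps_eq: "partial_sums a canon_seq m = (\<lambda>k. indicator {..<m} k * a k)"
  unfolding partial_sums_def using sum_delta_aux[of "{..<m}"] by simp

lemma ps_perm_eq:
  assumes "bij \<pi>"
  shows "partial_sums (a \<circ> \<pi>) (canon_seq \<circ> \<pi>) m = (\<lambda>k. indicator (\<pi> ` {..<m}) k * a k)"
proof
  fix k
  have inj: "inj_on \<pi> {..<m}" using inj_on_subset[OF bij_is_inj[OF assms] subset_UNIV] .
  have "partial_sums (a \<circ> \<pi>) (canon_seq \<circ> \<pi>) m k = (\<Sum>n<m. (\<lambda>j. a j * canon_seq j k) (\<pi> n))"
    unfolding partial_sums_def by simp
  also have "\<dots> = (\<Sum>j\<in>\<pi> ` {..<m}. a j * canon_seq j k)"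
    using sum.reindex[OF inj, of "\<lambda>j. a j * canon_seq j k"] by simp
  also have "\<dots> = indicator (\<pi> ` {..<m}) k * a k"
    by (rule sum_delta_aux) simp
  finally show "partial_sums (a \<circ> \<pi>) (canon_seq \<circ> \<pi>) m k = indicator (\<pi> ` {..<m}) k * a k" .
qed

theorem proposition4p7:
  fixes \<mu> :: "nat measure" and X :: "(nat \<Rightarrow> real) set" and N :: "(nat \<Rightarrow> real) \<Rightarrow> real"
  assumes "space \<mu> = UNIV" and "sets \<mu> = Pow UNIV"
    and "finite_measure \<mu>"
    and "\<forall>n. emeasure \<mu> {n} > 0"
    and B: "banach_rectangular_seq_space X N"
    and E: "\<forall>n. canon_seq n \<in> X"
  shows "unconditional_basis X N canon_seq (seq_closure X N (seq_span canon_seq))"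
proof -
  define Y where "Y = seq_closure X N (seq_span canon_seq)"
  have ns: "normed_seq_space X N" using B unfolding banach_rectangular_seq_space_def by blast
  obtain C where C: "C > 0" and rect: "\<forall>f\<in>X. \<forall>A::nat set.
        (\<lambda>k. indicator A k * f k) \<in> X \<and> N (\<lambda>k. indicator A k * f k) \<le> C * N f"
    using B unfolding banach_rectangular_seq_space_def by blast
  have N0: "N (\<lambda>k. 0) = 0" using ns unfolding normed_seq_space_def by blast
  have eY: "canon_seq n \<in> Y" for n
  proof -
    have "\<exists>F c. canon_seq n = (\<lambda>k. \<Sum>j\<in>F. c j * canon_seq j k) \<and> finite F"
      by (rule exI[of _ "{n}"], rule exI[of _ "\<lambda>_. 1"]) simp
    then have "canon_seq n \<in> seq_span canon_seq" unfolding seq_span_def by simp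
    moreover have "norm_conv N (\<lambda>m. canon_seq n) (canon_seq n)"
      unfolding norm_conv_def using N0 by simp
    ultimately have "\<exists>s. (\<forall>m. s m \<in> seq_span canon_seq) \<and> norm_conv N s (canon_seq n)"
      by (intro exI[of _ "\<lambda>m. canon_seq n"]) simp
    then show ?thesis unfolding Y_def seq_closure_def using E by simp
  qed
  have perm: "norm_conv N (partial_sums (x \<circ> \<pi>) (canon_seq \<circ> \<pi>)) x"
    if x: "x \<in> Y" and p: "bij \<pi>" for x \<pi>
    unfolding norm_conv_def ps_perm_eq[OF p]
  proof (rule LIMSEQ_I)
    fix r :: real assume r: "0 < r"
    obtain M where M: "\<forall>A. {..<M} \<subseteq> A \<longrightarrow> \<bar>N (\<lambda>k. indicator A k * x k - x k)\<bar> < r"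
      using keylemma[OF B E _ r] x unfolding Y_def by blast
    obtain m0 where m0: "inv \<pi> ` {..<M} \<subseteq> {..<m0}" using finite_nat_bounded[of "inv \<pi> ` {..<M}"] by blast
    have "{..<M} \<subseteq> \<pi> ` {..<n}" if n: "n \<ge> m0" for n
    proof
      fix j assume j: "j \<in> {..<M}"
      have "inv \<pi> j \<in> {..<n}" using m0 j n by auto
      moreover have "\<pi> (inv \<pi> j) = j" using surj_f_inv_f[OF bij_is_surj[OF p]] .
      ultimately show "j \<in> \<pi> ` {..<n}" by force
    qed
    then have "\<forall>n\<ge>m0. norm (N (\<lambda>k. indicator (\<pi> ` {..<n}) k * x k - x k) - 0) < r"
      using M by (simp only: real_norm_def diff_zero) blast
    then show "\<exists>no. \<forall>n\<ge>no. norm (N (\<lambda>k. indicator (\<pi> ` {..<n}) k * x k - x k) - 0) < r"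
      by blast
  qed
  have conv: "norm_conv N (partial_sums x canon_seq) x" if x: "x \<in> Y" for x
    using perm[OF x bij_id] by simp
  have uniq: "a = x" if x: "x \<in> Y" and c: "norm_conv N (partial_sums a canon_seq) x" for x a
  proof
    fix k
    have xX: "x \<in> X" using x unfolding Y_def seq_closure_def by blast
    have bound: "\<bar>a k - x k\<bar> * N (canon_seq k) \<le> C * N (\<lambda>j. partial_sums a canon_seq m j - x j)"
      if m: "m > k" for m
    proof -
      have "\<exists>F c. partial_sums a canon_seq m = (\<lambda>k. \<Sum>n\<in>F. c n * canon_seq n k) \<and> finite F"
        by (rule exI[of _ "{..<m}"], rule exI[of _ a]) (simp add: partial_sums_def)
      then have "partial_sums a canon_seq m \<in> seq_span canon_seq"
        unfolding seq_span_def by simp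
      then have pX: "partial_sums a canon_seq m \<in> X" using span_sub[OF ns E] by blast
      define d where "d = (\<lambda>j. partial_sums a canon_seq m j - x j)"
      have dX: "d \<in> X" unfolding d_def using diff_in[OF ns pX xX] .
      have dk: "d k = a k - x k" unfolding d_def ps_eq using m by simp
      have eq: "(\<lambda>j. indicator {k} j * d j) = (\<lambda>j. d k * canon_seq k j)"
        unfolding canon_seq_def indicator_def by auto
      have "N (\<lambda>j. d k * canon_seq k j) = \<bar>d k\<bar> * N (canon_seq k)"
        using ns_homog[OF ns, of "canon_seq k" "d k"] E by simp
      moreover have "N (\<lambda>j. indicator {k} j * d j) \<le> C * N d" using bspec[OF rect dX] by blast
      ultimately have "\<bar>a k - x k\<bar> * N (canon_seq k) \<le> C * N d" using eq dk by simp
      then show ?thesis unfolding d_def .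
    qed
    have lim: "(\<lambda>m. C * N (\<lambda>j. partial_sums a canon_seq m j - x j)) \<longlonglongrightarrow> 0"
      using tendsto_mult_right_zero[OF c[unfolded norm_conv_def], of C] .
    have le: "\<bar>a k - x k\<bar> * N (canon_seq k) \<le> 0"
    proof -
      have "\<exists>M. \<forall>m\<ge>M. \<bar>a k - x k\<bar> * N (canon_seq k) \<le> C * N (\<lambda>j. partial_sums a canon_seq m j - x j)"
        by (rule exI[of _ "Suc k"]) (auto intro: bound)
      from LIMSEQ_le_const[OF lim this] show ?thesis .
    qed
    have "N (canon_seq k) \<noteq> 0"
    proof
      assume "N (canon_seq k) = 0"
      then have "canon_seq k = (\<lambda>j. 0)" using ns_zero[OF ns, of "canon_seq k"] E by simp
      then have "canon_seq k k = 0" by simp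
      then show False unfolding canon_seq_def by simp
    qed
    moreover have "N (canon_seq k) \<ge> 0" using ns_nonneg[OF ns] E by blast
    ultimately have pos: "N (canon_seq k) > 0" by simp
    show "a k = x k"
    proof (rule ccontr)
      assume "a k \<noteq> x k"
      then have "\<bar>a k - x k\<bar> > 0" by simp
      then have "\<bar>a k - x k\<bar> * N (canon_seq k) > 0" using pos by (rule mult_pos_pos)
      then show False using le by simp
    qed
  qed
  have "schauder_basis N canon_seq Y"
    unfolding schauder_basis_def
  proof (intro conjI allI ballI)
    fix n show "canon_seq n \<in> Y" by (rule eY)
  next
    fix x assume x: "x \<in> Y"
    show "\<exists>!a. norm_conv N (partial_sums a canon_seq) x"
      by (rule ex1I[of _ x]) (rule conv[OF x], rule uniq[OF x])
  qed
  moreover have "\<forall>x\<in>Y. \<forall>a. norm_conv N (partial_sums a canon_seq) x \<longrightarrow>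
        (\<forall>\<pi>::nat\<Rightarrow>nat. bij \<pi> \<longrightarrow> (\<exists>y\<in>X. norm_conv N (partial_sums (a \<circ> \<pi>) (canon_seq \<circ> \<pi>)) y))"
  proof (intro ballI allI impI)
    fix x a and \<pi> :: "nat \<Rightarrow> nat" assume x: "x \<in> Y" and c: "norm_conv N (partial_sums a canon_seq) x" and p: "bij \<pi>"
    have "a = x" using uniq[OF x c] .
    moreover have "x \<in> X" using x unfolding Y_def seq_closure_def by blast
    ultimately show "\<exists>y\<in>X. norm_conv N (partial_sums (a \<circ> \<pi>) (canon_seq \<circ> \<pi>)) y"
      using perm[OF x p] by (intro bexI[of _ x]) simp_all
  qed
  ultimately have "unconditional_basis X N canon_seq Y" unfolding unconditional_basis_def by (rule conjI)
  then show ?thesis unfolding Y_def .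
qed

end
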